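(* Let $q$ be an odd prime power, $z\in\mathbb F_q^\times$, and $A\in\widehat{\mathbb F_q^\times}$ of order larger than $2$. Then $${}_2\mathbb F_1\!\left[\begin{matrix}A&A\phi\\&\phi\end{matrix};z\right]=\frac{1+\phi(z)}2\left(\overline A^2(1+\sqrt z)+\overline A^2(1-\sqrt z)\right),$$ $${}_2\mathbb F_1\!\left[\begin{matrix}A&A\phi\\&A^2\end{matrix};z\right]=\frac{1+\phi(1-z)}2\left(\overline A^2\!\left(\frac{1+\sqrt{1-z}}2\right)+\overline A^2\!\left(\frac{1-\sqrt{1-z}}2\right)\right).$$
   Context: $\mathbb F_q$ is a finite field with $q$ elements, $q$ a power of an odd prime $p$. $\widehat{\mathbb F_q^\times}$ is the group of multiplicative characters $\chi:\mathbb F_q^\times\to\mathbb C^\times$; every character, including the trivial character $\varepsilon$, is extended to $\mathbb F_q$ by $\chi(0)=0$. $\phi$ is the quadratic character, $\overline\chi$ denotes the complex-conjugate (inverse) character, and products/powers of characters are pointwise. Jacobi sum: $J(A,B)=\sum_{x\in\mathbb F_q}A(x)B(1-x)$. Period function: ${}_2\mathbb P_1\!\left[\begin{matrix}A&B\\&C\end{matrix};\lambda\right]=\sum_{y\in\mathbb F_q}B(y)\,\overline BC(1-y)\,\overline A(1-\lambda y)$; normalized function ${}_2\mathbb F_1\!\left[\begin{matrix}A&B\\&C\end{matrix};\lambda\right]=\frac{1}{J(B,C\overline B)}\,{}_2\mathbb P_1\!\left[\begin{matrix}A&B\\&C\end{matrix};\lambda\right]$. For $w\in\mathbb F_q$,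 $\sqrt w$ denotes either square root of $w$ in $\mathbb F_q$ when one exists (the expressions do not depend on the choice); when $w$ is a nonzero non-square the prefactor $(1+\phi(w))/2$ is $0$ and the whole right-hand side is interpreted as $0$. *)

theory Defs
  imports "HOL-Analysis.Analysis"
begin

definition mult_char :: "('a::{field,finite} \<Rightarrow> complex) \<Rightarrow> bool" where
  "mult_char c \<longleftrightarrow> c 0 = 0 \<and> (\<forall>x. x \<noteq> 0 \<longrightarrow> c x \<noteq> 0) \<and>
     (\<forall>x y. x \<noteq> 0 \<longrightarrow> y \<noteq> 0 \<longrightarrow> c (x * y) = c x * c y)"

definition char_order :: "('a::{field,finite} \<Rightarrow> complex) \<Rightarrow> nat" where
  "char_order c = (LEAST n. 0 < n \<and> (\<forall>x. x \<noteq> 0 \<longrightarrow> c x ^ n = 1))"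

definition qchar :: "'a::{field,finite} \<Rightarrow> complex" where
  "qchar x = (if x = 0 then 0 else if (\<exists>y. y ^ 2 = x) then 1 else -1)"

definition cconj :: "('a \<Rightarrow> complex) \<Rightarrow> 'a \<Rightarrow> complex" where
  "cconj c x = cnj (c x)"

definition cmul :: "('a \<Rightarrow> complex) \<Rightarrow> ('a \<Rightarrow> complex) \<Rightarrow> 'a \<Rightarrow> complex" where
  "cmul c d x = c x * d x"

definition jacobi :: "('a::{field,finite} \<Rightarrow> complex) \<Rightarrow> ('a \<Rightarrow> complex) \<Rightarrow> complex" where
  "jacobi A B = (\<Sum>x\<in>UNIV. A x * B (1 - x))"

definition P21 :: "('a::{field,finite} \<Rightarrow> complex) \<Rightarrow> ('a \<Rightarrow> complex) \<Rightarrow> ('a \<Rightarrow> complex) \<Rightarrow> 'a \<Rightarrow> complex" where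
  "P21 A B C lam = (\<Sum>y\<in>UNIV. B y * cmul (cconj B) C (1 - y) * cconj A (1 - lam * y))"

definition F21 :: "('a::{field,finite} \<Rightarrow> complex) \<Rightarrow> ('a \<Rightarrow> complex) \<Rightarrow> ('a \<Rightarrow> complex) \<Rightarrow> 'a \<Rightarrow> complex" where
  "F21 A B C lam = P21 A B C lam / jacobi B (cmul C (cconj B))"

end

theory Submission
  imports Defs
begin

section \<open>Basic field facts\<close>

lemma sum_shift1:
  fixes f :: "'a::{field,finite} \<Rightarrow> 'b::comm_monoid_add"
  shows "(\<Sum>x\<in>UNIV. f (x + c)) = (\<Sum>x\<in>UNIV. f x)"
  by (rule sum.reindex_bij_witness[of _ "\<lambda>x. x - c" "\<lambda>x. x + c"]) auto

lemma card_of_nat_zero: "(of_nat CARD('a::{field,finite}) :: 'a) = 0"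
proof -
  have "(\<Sum>x\<in>(UNIV::'a set). x + 1) = (\<Sum>x\<in>UNIV. x)"
    using sum_shift1[of "\<lambda>x. x" 1] by simp
  then show ?thesis by (simp add: sum.distrib)
qed

lemma two_nz:
  assumes "odd CARD('a::{field,finite})"
  shows "(2::'a) \<noteq> 0"
proof
  assume h: "(2::'a) = 0"
  obtain k where k: "CARD('a) = 2 * k + 1" using assms oddE by blast
  have "(of_nat CARD('a)::'a) = 2 * of_nat k + 1" by (simp add: k)
  also have "\<dots> = 1" using h by simp
  finally show False using card_of_nat_zero[where 'a='a] by simp
qed

lemma nonzero_pow:
  fixes x :: "'a::{field,finite}"
  assumes "x \<noteq> 0"
  shows "x ^ (CARD('a) - 1) = 1"
proof -
  let ?S = "{y::'a. y \<noteq> 0}"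
  have cS: "card ?S = CARD('a) - 1"
  proof -
    have "?S = UNIV - {0}" by auto
    then show ?thesis by (simp add: card_Diff_subset)
  qed
  have "(\<Prod>y\<in>?S. x * y) = (\<Prod>y\<in>?S. y)"
    by (rule prod.reindex_bij_witness[of _ "\<lambda>y. y / x" "\<lambda>y. x * y"]) (use assms in auto)
  moreover have "(\<Prod>y\<in>?S. x * y) = x ^ card ?S * (\<Prod>y\<in>?S. y)"
    by (simp add: prod.distrib)
  moreover have "(\<Prod>y\<in>?S. y) \<noteq> 0" by simp
  ultimately show ?thesis using cS by simp
qed


lemma card_ge2: "CARD('a::{field,finite}) \<ge> 2"
proof -
  have "{0::'a, 1} \<subseteq> UNIV" by simp
  then have "card {0::'a, 1} \<le> CARD('a)" by (intro card_mono) simp_all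
  then show ?thesis by simp
qed

lemma char_sum_zero:
  fixes ch :: "'a::{field,finite} \<Rightarrow> complex"
  assumes mult: "\<And>x y. ch (x * y) = ch x * ch y" and g: "g \<noteq> 0" "ch g \<noteq> 1"
  shows "(\<Sum>x\<in>UNIV. ch x) = 0"
proof -
  have "(\<Sum>x\<in>UNIV. ch (g * x)) = (\<Sum>x\<in>UNIV. ch x)"
    by (rule sum.reindex_bij_witness[of _ "\<lambda>y. y / g" "\<lambda>y. g * y"]) (use g in auto)
  then have "ch g * (\<Sum>x\<in>UNIV. ch x) = (\<Sum>x\<in>UNIV. ch x)"
    by (simp add: mult sum_distrib_left)
  then have "(ch g - 1) * (\<Sum>x\<in>UNIV. ch x) = 0" by (simp add: algebra_simps)
  then show ?thesis using g by simp
qed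

context
  fixes A :: "'a::{field,finite} \<Rightarrow> complex"
  assumes Ach: "mult_char A"
begin

lemma A0: "A 0 = 0" using Ach by (simp add: mult_char_def)

lemma A_nz: "x \<noteq> 0 \<Longrightarrow> A x \<noteq> 0" using Ach by (simp add: mult_char_def)

lemma A_mult: "A (x * y) = A x * A y"
  using Ach A0 by (cases "x = 0 \<or> y = 0") (auto simp: mult_char_def)

lemma A_one: "A 1 = 1"
proof -
  have "A 1 = A 1 * A 1" using A_mult[of 1 1] by simp
  then show ?thesis using A_nz[of 1] by simp
qed

lemma A_pow: "x \<noteq> 0 \<Longrightarrow> A x ^ (CARD('a) - 1) = 1"
proof -
  assume x: "x \<noteq> 0"
  have pw: "\<And>n. A (x ^ n) = A x ^ n"
  proof -
    fix n show "A (x ^ n) = A x ^ n" by (induct n) (simp_all add: A_one A_mult)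
  qed
  have "A (x ^ (CARD('a) - 1)) = A 1" using nonzero_pow[OF x] by simp
  then show ?thesis by (simp add: pw A_one)
qed

lemma A_norm: "x \<noteq> 0 \<Longrightarrow> norm (A x) = 1"
proof -
  assume x: "x \<noteq> 0"
  obtain n where n: "CARD('a) - 1 = Suc n" using card_ge2[where 'a='a]
    by (intro that[of "CARD('a) - 2"]) simp
  have "norm (A x ^ Suc n) = 1" using A_pow[OF x] n by simp
  then have "norm (A x) ^ Suc n = 1 ^ Suc n" by (simp only: norm_power power_one)
  then show ?thesis by (rule power_inject_base) auto
qed

lemma A_inv: "A (inverse x) = inverse (A x)"
proof (cases "x = 0")
  case True then show ?thesis by (simp add: A0)
next
  case False
  have "A x * A (inverse x) = 1" using False by (simp flip: A_mult add: A_one)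
  then show ?thesis by (metis inverse_unique)
qed

lemma A_cnj: "cnj (A x) = A (inverse x)"
proof (cases "x = 0")
  case True then show ?thesis by (simp add: A0)
next
  case False
  have "A x * cnj (A x) = 1"
    using A_norm[OF False] complex_norm_square[of "A x"] by simp
  then show ?thesis by (simp add: A_inv inverse_unique)
qed

lemma A_div: "A x * cnj (A y) = A (x / y)"
  by (simp add: A_cnj A_mult divide_inverse)

end


section \<open>Quadratic character\<close>

lemma qchar_0[simp]: "qchar 0 = 0" by (simp add: qchar_def)

lemma qchar_sq: "t \<noteq> 0 \<Longrightarrow> qchar (t ^ 2) = 1"
  by (auto simp: qchar_def)

lemma qchar_mul_sq:
  fixes x t :: "'a::{field,finite}"
  assumes t: "t \<noteq> 0"
  shows "qchar (x * t ^ 2) = qchar x"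
proof (cases "x = 0")
  case True then show ?thesis by simp
next
  case False
  have "(\<exists>y. y ^ 2 = x * t ^ 2) \<longleftrightarrow> (\<exists>y. y ^ 2 = x)"
  proof
    assume "\<exists>y. y ^ 2 = x * t ^ 2"
    then obtain y where "y ^ 2 = x * t ^ 2" by blast
    then have "(y / t) ^ 2 = x" using t by (simp add: power_divide)
    then show "\<exists>y. y ^ 2 = x" by blast
  next
    assume "\<exists>y. y ^ 2 = x"
    then obtain y where "y ^ 2 = x" by blast
    then have "(y * t) ^ 2 = x * t ^ 2" by (simp add: power_mult_distrib)
    then show "\<exists>y. y ^ 2 = x * t ^ 2" by blast
  qed
  then show ?thesis using False t by (simp add: qchar_def)
qed

lemma qchar_vals: "qchar x = 0 \<or> qchar x = 1 \<or> qchar x = -1"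
  by (simp add: qchar_def)

lemma qchar_cnj[simp]: "cnj (qchar x) = qchar x"
  by (simp add: qchar_def)

lemma qchar_sq_eq: "x \<noteq> 0 \<Longrightarrow> qchar x * qchar x = 1"
  by (simp add: qchar_def)

lemma qchar_nz: "x \<noteq> 0 \<Longrightarrow> qchar x \<noteq> 0"
  by (simp add: qchar_def)

lemma qchar_eq0: "qchar x = 0 \<longleftrightarrow> x = 0"
  by (simp add: qchar_def)

definition sqset :: "'a::{field,finite} set" where
  "sqset = {w. w \<noteq> 0 \<and> (\<exists>t. t ^ 2 = w)}"

definition nsqset :: "'a::{field,finite} set" where
  "nsqset = {w. w \<noteq> 0 \<and> \<not> (\<exists>t. t ^ 2 = w)}"

lemma card_sqset:
  assumes two: "(2::'a::{field,finite}) \<noteq> 0"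
  shows "2 * card (sqset::'a set) = CARD('a) - 1"
proof -
  let ?D = "{t::'a. t \<noteq> 0}"
  have cD: "card ?D = CARD('a) - 1"
  proof -
    have "?D = UNIV - {0}" by auto
    then show ?thesis by (simp add: card_Diff_subset)
  qed
  have grp: "(\<Sum>w\<in>sqset. \<Sum>t\<in>{t. t \<in> ?D \<and> t ^ 2 = w}. (1::nat)) = (\<Sum>t\<in>?D. 1)"
    by (rule sum.group) (auto simp: sqset_def)
  have fib: "card {t::'a. t \<noteq> 0 \<and> t ^ 2 = w} = 2" if w: "w \<in> sqset" for w
  proof -
    obtain t0 where t0: "t0 ^ 2 = w" "t0 \<noteq> 0" using w by (auto simp: sqset_def)
    have "{t::'a. t \<noteq> 0 \<and> t ^ 2 = w} = {t0, -t0}"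
    proof (rule set_eqI, rule iffI)
      fix t assume "t \<in> {t::'a. t \<noteq> 0 \<and> t ^ 2 = w}"
      then have "t ^ 2 = t0 ^ 2" using t0 by simp
      then have "(t - t0) * (t + t0) = 0" by (simp add: algebra_simps power2_eq_square)
      then show "t \<in> {t0, -t0}" by (auto simp: add_eq_0_iff)
    next
      fix t assume "t \<in> {t0, -t0}"
      then show "t \<in> {t::'a. t \<noteq> 0 \<and> t ^ 2 = w}" using t0 by auto
    qed
    moreover have "t0 \<noteq> -t0"
    proof
      assume "t0 = -t0"
      then have "2 * t0 = 0" by (simp add: algebra_simps)
      then show False using two t0 by simp
    qed
    ultimately show ?thesis by simp
  qed
  have "(\<Sum>w\<in>sqset. \<Sum>t\<in>{t. t \<in> ?D \<and> t ^ 2 = w}. (1::nat)) = (\<Sum>w\<in>(sqset::'a set). 2)"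
    by (rule sum.cong) (simp_all add: fib)
  then show ?thesis using grp cD by simp
qed

lemma card_nsqset:
  assumes two: "(2::'a::{field,finite}) \<noteq> 0"
  shows "card (nsqset::'a set) = card (sqset::'a set)"
proof -
  have "sqset \<union> nsqset = UNIV - {0::'a}" by (auto simp: sqset_def nsqset_def)
  moreover have "sqset \<inter> nsqset = ({}::'a set)" by (auto simp: sqset_def nsqset_def)
  ultimately have "card (sqset::'a set) + card (nsqset::'a set) = CARD('a) - 1"
    by (metis card_Diff_singleton card_Un_disjoint finite iso_tuple_UNIV_I)
  then show ?thesis using card_sqset[OF two] by simp
qed

lemma nsq_mult:
  fixes x y :: "'a::{field,finite}"
  assumes two: "(2::'a) \<noteq> 0" and x: "x \<in> nsqset" and y: "y \<in> nsqset"
  shows "\<exists>t. t ^ 2 = x * y"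
proof -
  have x0: "x \<noteq> 0" using x by (simp add: nsqset_def)
  have sub: "(\<lambda>w. x * w) ` sqset \<subseteq> nsqset"
  proof
    fix v assume "v \<in> (\<lambda>w. x * w) ` sqset"
    then obtain t where t: "t \<noteq> 0" "v = x * t ^ 2" by (auto simp: sqset_def)
    have "\<not> (\<exists>c. c ^ 2 = v)"
    proof
      assume "\<exists>c. c ^ 2 = v"
      then obtain c where "c ^ 2 = x * t ^ 2" using t by blast
      then have "(c / t) ^ 2 = x" using t by (simp add: power_divide)
      then show False using x by (auto simp: nsqset_def)
    qed
    then show "v \<in> nsqset" using t x0 by (simp add: nsqset_def)
  qed
  have "card ((\<lambda>w. x * w) ` sqset) = card (sqset::'a set)"
    by (rule card_image) (use x0 in \<open>auto simp: inj_on_def\<close>)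
  then have "(\<lambda>w. x * w) ` sqset = nsqset"
    using card_subset_eq[OF _ sub] card_nsqset[OF two] by simp
  then obtain w where "w \<in> sqset" "y = x * w" using y by blast
  then obtain t where "y = x * t ^ 2" by (auto simp: sqset_def)
  then have "(x * t) ^ 2 = x * y" by (simp add: power2_eq_square)
  then show ?thesis by blast
qed

lemma qchar_mult:
  fixes x y :: "'a::{field,finite}"
  assumes two: "(2::'a) \<noteq> 0"
  shows "qchar (x * y) = qchar x * qchar y"
proof (cases "x = 0 \<or> y = 0")
  case True then show ?thesis by auto
next
  case False
  then have x0: "x \<noteq> 0" and y0: "y \<noteq> 0" by auto
  show ?thesis
  proof (cases "\<exists>t. t ^ 2 = x")
    case True
    then obtain t where t: "t ^ 2 = x" by blast
    then have "t \<noteq> 0" using x0 by auto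
    then show ?thesis using qchar_mul_sq[of t y] qchar_sq[of t] t by (simp add: mult.commute)
  next
    case nx: False
    show ?thesis
    proof (cases "\<exists>t. t ^ 2 = y")
      case True
      then obtain t where t: "t ^ 2 = y" by blast
      then have "t \<noteq> 0" using y0 by auto
      then show ?thesis using qchar_mul_sq[of t x] qchar_sq[of t] t by simp
    next
      case False
      have "\<exists>t. t ^ 2 = x * y"
        using nsq_mult[OF two, of x y] nx False x0 y0 by (simp add: nsqset_def)
      then show ?thesis using nx False x0 y0 by (simp add: qchar_def)
    qed
  qed
qed

lemma exists_nsq:
  assumes q: "odd CARD('a::{field,finite})"
  shows "\<exists>n::'a. n \<noteq> 0 \<and> \<not> (\<exists>t. t ^ 2 = n)"
proof -
  have two: "(2::'a) \<noteq> 0" using two_nz[OF q] .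
  have "CARD('a) \<ge> 3" using card_ge2[where 'a='a] q by presburger
  then have "card (nsqset::'a set) \<noteq> 0" using card_sqset[OF two] card_nsqset[OF two] by linarith
  then obtain n where "n \<in> (nsqset::'a set)" by fastforce
  then show ?thesis by (auto simp: nsqset_def)
qed


section \<open>Fibers and square roots\<close>

lemma sum_fiber:
  fixes g :: "'a::finite \<Rightarrow> 'b::finite" and F :: "'b \<Rightarrow> complex" and w :: "'a \<Rightarrow> complex"
  shows "(\<Sum>y\<in>UNIV. w y * F (g y)) = (\<Sum>u\<in>UNIV. F u * (\<Sum>y\<in>{y. g y = u}. w y))"
proof -
  have "(\<Sum>u\<in>UNIV. F u * (\<Sum>y\<in>{y. g y = u}. w y)) = (\<Sum>u\<in>UNIV. \<Sum>y\<in>{y. y \<in> UNIV \<and> g y = u}. w y * F (g y))"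
    by (rule sum.cong) (auto simp: sum_distrib_left mult.commute intro!: sum.cong)
  also have "\<dots> = (\<Sum>y\<in>UNIV. w y * F (g y))"
    by (rule sum.group) auto
  finally show ?thesis by simp
qed

lemma sq_eq_sq:
  fixes t r :: "'a::field"
  shows "r ^ 2 = t ^ 2 \<longleftrightarrow> r = t \<or> r = -t"
proof -
  have "r ^ 2 = t ^ 2 \<longleftrightarrow> (r - t) * (r + t) = 0" by (simp add: algebra_simps power2_eq_square)
  also have "\<dots> \<longleftrightarrow> r = t \<or> r = -t" by (auto simp: add_eq_0_iff)
  finally show ?thesis .
qed

lemma qchar_pm1: "x \<noteq> 0 \<Longrightarrow> qchar x = 1 \<or> qchar x = -1"
  by (simp add: qchar_def)

lemma sqrt_sum:
  fixes a b u :: "'a::{field,finite}" and f :: "'a \<Rightarrow> 'a"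
  assumes two: "(2::'a) \<noteq> 0" and u: "u \<noteq> 0" and ab: "a \<noteq> 0 \<or> b \<noteq> 0"
    and ha: "\<And>r. r ^ 2 = a * b \<Longrightarrow> a \<noteq> 0 \<Longrightarrow> qchar (f r) = qchar (u * a)"
    and hb: "\<And>r. r ^ 2 = a * b \<Longrightarrow> b \<noteq> 0 \<Longrightarrow> qchar (f r) = qchar (u * b)"
  shows "(\<Sum>r\<in>{r. r ^ 2 = a * b}. qchar (f r)) = qchar (u * a) + qchar (u * b)"
proof (cases "a * b = 0")
  case True
  then have "{r. r ^ 2 = a * b} = {0}" by auto
  moreover have "a = 0 \<and> b \<noteq> 0 \<or> a \<noteq> 0 \<and> b = 0" using True ab by auto
  ultimately show ?thesis using ha[of 0] hb[of 0] True by auto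
next
  case False
  then have a0: "a \<noteq> 0" and b0: "b \<noteq> 0" by auto
  have qab: "qchar (a * b) = qchar a * qchar b" by (rule qchar_mult[OF two])
  have qua: "qchar (u * a) = qchar u * qchar a" by (rule qchar_mult[OF two])
  have qub: "qchar (u * b) = qchar u * qchar b" by (rule qchar_mult[OF two])
  show ?thesis
  proof (cases "\<exists>t. t ^ 2 = a * b")
    case True
    then obtain t where t: "t ^ 2 = a * b" by blast
    then have t0: "t \<noteq> 0" using False by auto
    have "{r. r ^ 2 = a * b} = {t, -t}" using t sq_eq_sq[of _ t] by auto
    moreover have "t \<noteq> -t"
    proof
      assume "t = -t"
      then have "2 * t = 0" by (simp add: algebra_simps)
      then show False using two t0 by simp
    qed
    moreover have "qchar a = qchar b"
    proof -
      have "qchar a * qchar b = 1" using qab qchar_sq[OF t0] t by simp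
      then show ?thesis using qchar_pm1[OF a0] qchar_pm1[OF b0] by auto
    qed
    ultimately show ?thesis using hb[of t] hb[of "-t"] t b0 qua qub by simp
  next
    case nt: False
    then have "{r. r ^ 2 = a * b} = {}" by auto
    moreover have "qchar a * qchar b = -1" using nt False qab by (simp add: qchar_def)
    then have "qchar a + qchar b = 0" using qchar_pm1[OF a0] qchar_pm1[OF b0] by auto
    ultimately show ?thesis using qua qub by (simp add: distrib_left[symmetric])
  qed
qed


section \<open>Norm of Jacobi sums\<close>

lemma moeb_fiber:
  fixes a v :: "'a::field"
  assumes a1: "a \<noteq> 1" and v0: "v \<noteq> 0"
  shows "{y. (1 - a * y) / (1 - y) = v} = (if v = a then {} else {(v - 1) / (v - a)})"
proof -
  have "(1 - a * y) / (1 - y) = v \<longleftrightarrow> y \<noteq> 1 \<and> y * (v - a) = v - 1" for y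
  proof (cases "y = 1")
    case True then show ?thesis using v0 by simp
  next
    case False
    then have "1 - y \<noteq> 0" by simp
    then have "(1 - a * y) / (1 - y) = v \<longleftrightarrow> 1 - a * y = v * (1 - y)"
      by (simp add: field_simps)
    also have "\<dots> \<longleftrightarrow> y * (v - a) = v - 1" by (auto simp: algebra_simps)
    finally show ?thesis using False by simp
  qed
  then have eq: "{y. (1 - a * y) / (1 - y) = v} = {y. y \<noteq> 1 \<and> y * (v - a) = v - 1}" by blast
  show ?thesis
  proof (cases "v = a")
    case True then show ?thesis using eq a1 by auto
  next
    case False
    then have va: "v - a \<noteq> 0" by simp
    have "y \<noteq> 1 \<and> y * (v - a) = v - 1 \<longleftrightarrow> y = (v - 1) / (v - a)" for y
    proof
      assume "y \<noteq> 1 \<and> y * (v - a) = v - 1"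
      then show "y = (v - 1) / (v - a)" using va by (simp add: field_simps)
    next
      assume y: "y = (v - 1) / (v - a)"
      then have "y * (v - a) = v - 1" using va by simp
      moreover have "y \<noteq> 1"
      proof
        assume "y = 1"
        then have "v - a = v - 1" using y va by (simp add: field_simps)
        then show False using a1 by simp
      qed
      ultimately show "y \<noteq> 1 \<and> y * (v - a) = v - 1" by simp
    qed
    then show ?thesis using eq False by auto
  qed
qed

lemma jacobi_norm:
  fixes ch ps :: "'a::{field,finite} \<Rightarrow> complex"
  assumes mc: "\<And>x y. ch (x * y) = ch x * ch y" and mp: "\<And>x y. ps (x * y) = ps x * ps y"
    and c0: "ch 0 = 0" and p0: "ps 0 = 0" and c1: "ch 1 = 1" and p1: "ps 1 = 1"
    and cc: "\<And>x. cnj (ch x) = ch (inverse x)" and pc: "\<And>x. cnj (ps x) = ps (inverse x)"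
    and g1: "g1 \<noteq> 0" "ch g1 \<noteq> 1" and g2: "g2 \<noteq> 0" "ps g2 \<noteq> 1"
    and g3: "g3 \<noteq> 0" "ch g3 * ps g3 \<noteq> 1"
  shows "jacobi ch ps * cnj (jacobi ch ps) = of_nat CARD('a)"
proof -
  have sc: "(\<Sum>x\<in>UNIV. ch x) = 0" by (rule char_sum_zero[OF mc g1])
  have sp: "(\<Sum>x\<in>UNIV. ps x) = 0" by (rule char_sum_zero[OF mp g2])
  have scp: "(\<Sum>x\<in>UNIV. ch x * ps x) = 0"
    by (rule char_sum_zero[of "\<lambda>x. ch x * ps x", OF _ g3]) (simp add: mc mp)
  have "jacobi ch ps * cnj (jacobi ch ps)
      = (\<Sum>x\<in>UNIV. \<Sum>y\<in>UNIV. ch x * ps (1 - x) * cnj (ch y * ps (1 - y)))"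
    by (simp add: jacobi_def sum_product)
  also have "\<dots> = (\<Sum>y\<in>UNIV. \<Sum>x\<in>UNIV. ch (x / y) * ps ((1 - x) / (1 - y)))"
    by (subst sum.swap) (simp add: cc pc mc mp divide_inverse mult_ac)
  also have "\<dots> = (\<Sum>y\<in>UNIV. \<Sum>a\<in>UNIV. ch a * ps ((1 - a * y) / (1 - y)))"
  proof (rule sum.cong[OF refl])
    fix y :: 'a
    show "(\<Sum>x\<in>UNIV. ch (x / y) * ps ((1 - x) / (1 - y))) = (\<Sum>a\<in>UNIV. ch a * ps ((1 - a * y) / (1 - y)))"
    proof (cases "y = 0")
      case True
      then show ?thesis using sc by (simp add: c0 p1 flip: sum_distrib_right)
    next
      case False
      show ?thesis
        by (rule sum.reindex_bij_witness[of _ "\<lambda>x. x * y" "\<lambda>a. a / y"]) (use False in auto)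
    qed
  qed
  also have "\<dots> = (\<Sum>a\<in>UNIV. ch a * (\<Sum>y\<in>UNIV. ps ((1 - a * y) / (1 - y))))"
    by (subst sum.swap) (simp add: sum_distrib_left)
  also have "\<dots> = (\<Sum>a\<in>UNIV. ch a * (if a = 1 then of_nat CARD('a) - 1 else - ps a))"
  proof (rule sum.cong[OF refl])
    fix a :: 'a
    show "ch a * (\<Sum>y\<in>UNIV. ps ((1 - a * y) / (1 - y))) = ch a * (if a = 1 then of_nat CARD('a) - 1 else - ps a)"
    proof (cases "a = 1")
      case True
      have "(\<Sum>y\<in>UNIV. ps ((1 - y) / (1 - y))) = (\<Sum>y\<in>(UNIV::'a set). if y = 1 then 0 else 1)"
        by (intro sum.cong refl) (simp add: p0 p1)
      also have "\<dots> = of_nat CARD('a) - 1"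
        using card_ge2[where 'a='a] by (simp add: sum.If_cases Compl_eq_Diff_UNIV card_Diff_singleton of_nat_diff)
      finally show ?thesis using True by simp
    next
      case False
      have "(\<Sum>y\<in>UNIV. ps ((1 - a * y) / (1 - y))) = (\<Sum>y\<in>UNIV. 1 * ps ((1 - a * y) / (1 - y)))" by simp
      also have "\<dots> = (\<Sum>v\<in>UNIV. ps v * (\<Sum>y\<in>{y. (1 - a * y) / (1 - y) = v}. 1))"
        by (rule sum_fiber)
      also have "\<dots> = (\<Sum>v\<in>UNIV. ps v * (if v = a then 0 else 1))"
      proof (rule sum.cong[OF refl])
        fix v :: 'a
        show "ps v * (\<Sum>y\<in>{y. (1 - a * y) / (1 - y) = v}. 1) = ps v * (if v = a then 0 else 1)"
          by (cases "v = 0") (simp_all add: p0 moeb_fiber[OF False])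
      qed
      also have "\<dots> = (\<Sum>v\<in>UNIV. ps v - (if v = a then ps v else 0))"
        by (intro sum.cong refl) auto
      also have "\<dots> = (\<Sum>v\<in>UNIV. ps v) - ps a"
        by (simp add: sum_subtractf)
      finally show ?thesis using False sp by simp
    qed
  qed
  also have "\<dots> = ch 1 * (of_nat CARD('a) - 1) + (\<Sum>a\<in>UNIV - {1}. ch a * (- ps a))"
    by (subst sum.remove[of _ 1]) (auto intro!: sum.cong)
  also have "\<dots> = of_nat CARD('a) - 1 - ((\<Sum>a\<in>UNIV. ch a * ps a) - ch 1 * ps 1)"
    by (simp add: c1 sum_diff1 sum_negf)
  also have "\<dots> = of_nat CARD('a)" using scp c1 p1 by simp
  finally show ?thesis .
qed


lemma qchar_one[simp]: "qchar (1::'a::{field,finite}) = 1"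
  using qchar_sq[of "1::'a"] by simp

lemma qchar_inv:
  assumes two: "(2::'a::{field,finite}) \<noteq> 0"
  shows "qchar (inverse x) = qchar (x::'a)"
proof (cases "x = 0")
  case True then show ?thesis by simp
next
  case False
  have "x * (inverse x) ^ 2 = inverse x" using False by (simp add: power2_eq_square field_simps)
  then have "qchar (inverse x) = qchar (x * (inverse x) ^ 2)" by simp
  also have "\<dots> = qchar x" using False by (intro qchar_mul_sq) simp
  finally show ?thesis .
qed

lemma card_sqrts:
  assumes two: "(2::'a::{field,finite}) \<noteq> 0"
  shows "(\<Sum>r\<in>{r::'a. r ^ 2 = d}. (1::complex)) = 1 + qchar d"
proof (cases "d = 0")
  case True
  then have "{r::'a. r ^ 2 = d} = {0}" by auto
  then show ?thesis using True by simp
next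
  case False
  show ?thesis
  proof (cases "\<exists>t. t ^ 2 = d")
    case True
    then obtain t where t: "t ^ 2 = d" by blast
    then have t0: "t \<noteq> 0" using False by auto
    have "{r. r ^ 2 = d} = {t, -t}" using t sq_eq_sq[of _ t] by auto
    moreover have "t \<noteq> -t"
    proof
      assume "t = -t"
      then have "2 * t = 0" by (simp add: algebra_simps)
      then show False using two t0 by simp
    qed
    ultimately show ?thesis using True False by (simp add: qchar_def)
  next
    case nt: False
    then have "{r::'a. r ^ 2 = d} = {}" by auto
    then show ?thesis using nt False by (simp add: qchar_def)
  qed
qed

lemma sqrt_sum_antisym:
  fixes f :: "'a::{field,finite} \<Rightarrow> 'a"
  assumes h: "\<And>r. r ^ 2 = D \<Longrightarrow> qchar (f r) * qchar (f (- r)) = -1"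
  shows "(\<Sum>r\<in>{r. r ^ 2 = D}. qchar (f r)) = 0"
proof -
  have re: "(\<Sum>r\<in>{r. r ^ 2 = D}. qchar (f r)) = (\<Sum>r\<in>{r. r ^ 2 = D}. qchar (f (- r)))"
    by (rule sum.reindex_bij_witness[of _ uminus uminus]) auto
  have pw: "qchar (f r) + qchar (f (- r)) = 0" if "r ^ 2 = D" for r
    using h[OF that] qchar_vals[of "f r"] qchar_vals[of "f (-r)"] by auto
  have "(\<Sum>r\<in>{r. r ^ 2 = D}. qchar (f r)) + (\<Sum>r\<in>{r. r ^ 2 = D}. qchar (f (- r))) = 0"
    by (simp add: sum.distrib[symmetric] pw)
  then show ?thesis using re by simp
qed

lemma sum_image_inj:
  fixes g :: "'a::field \<Rightarrow> complex"
  assumes k: "k \<noteq> 0"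
  shows "(\<Sum>y\<in>(\<lambda>r. (m + r) / k) ` R. g y) = (\<Sum>r\<in>R. g ((m + r) / k))"
proof -
  have "inj_on (\<lambda>r. (m + r) / k) R" using k by (auto simp: inj_on_def field_simps)
  then show ?thesis using sum.reindex[of "\<lambda>r. (m + r) / k" R g] by (simp add: o_def)
qed


context
  fixes A :: "'a::{field,finite} \<Rightarrow> complex"
  assumes q: "odd CARD('a)" and Ach: "mult_char A" and Aord: "char_order A > 2"
begin

lemma two: "(2::'a) \<noteq> 0" using two_nz[OF q] .

lemma exA: "\<exists>g. g \<noteq> 0 \<and> A g ^ 2 \<noteq> 1"
proof (rule ccontr)
  assume "\<not> ?thesis"
  then have "\<forall>x. x \<noteq> 0 \<longrightarrow> A x ^ 2 = 1" by blast
  then have "char_order A \<le> 2" unfolding char_order_def by (intro Least_le) simp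
  then show False using Aord by simp
qed

definition Aq :: "'a \<Rightarrow> complex" where "Aq x = A x * qchar x"
definition Ai :: "'a \<Rightarrow> complex" where "Ai x = A (inverse x)"

lemma qm: "qchar ((x::'a) * y) = qchar x * qchar y" by (rule qchar_mult[OF two])

lemma Aq_mult: "Aq (x * y) = Aq x * Aq y"
  by (simp add: Aq_def A_mult[OF Ach] qm)
lemma Ai_mult: "Ai (x * y) = Ai x * Ai y"
  by (simp add: Ai_def A_mult[OF Ach])
lemma Aq0: "Aq 0 = 0" by (simp add: Aq_def A0[OF Ach])
lemma Ai0: "Ai 0 = 0" by (simp add: Ai_def A0[OF Ach])
lemma Aq1: "Aq 1 = 1" by (simp add: Aq_def A_one[OF Ach])
lemma Ai1: "Ai 1 = 1" by (simp add: Ai_def A_one[OF Ach])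
lemma Aq_cnj: "cnj (Aq x) = Aq (inverse x)"
  by (simp add: Aq_def A_cnj[OF Ach] qchar_inv[OF two])
lemma Ai_cnj: "cnj (Ai x) = Ai (inverse x)"
  by (simp add: Ai_def A_cnj[OF Ach])

lemma sum_Aq: "(\<Sum>x\<in>UNIV. Aq x) = 0"
proof -
  obtain g where g: "g \<noteq> 0" "A g ^ 2 \<noteq> 1" using exA by blast
  have "Aq g \<noteq> 1"
  proof
    assume h: "Aq g = 1"
    then have "A g = qchar g" using qchar_sq_eq[OF g(1)] unfolding Aq_def
      by (metis mult.assoc mult.right_neutral)
    then have "A g ^ 2 = 1" using qchar_sq_eq[OF g(1)] by (simp add: power2_eq_square)
    then show False using g by simp
  qed
  then show ?thesis using char_sum_zero[OF Aq_mult g(1)] by simp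
qed

lemma sum_Aq': "(\<Sum>u\<in>UNIV. A u * qchar u) = 0"
  using sum_Aq by (simp add: Aq_def)

lemma J1_ne: "jacobi Aq Ai \<noteq> 0"
proof -
  obtain g where g: "g \<noteq> 0" "A g ^ 2 \<noteq> 1" using exA by blast
  have g1: "Aq g \<noteq> 1"
  proof
    assume h: "Aq g = 1"
    then have "A g = qchar g" using qchar_sq_eq[OF g(1)] unfolding Aq_def
      by (metis mult.assoc mult.right_neutral)
    then have "A g ^ 2 = 1" using qchar_sq_eq[OF g(1)] by (simp add: power2_eq_square)
    then show False using g by simp
  qed
  have g2: "Ai (inverse g) \<noteq> 1" using g by (auto simp: Ai_def)
  obtain n :: 'a where n: "n \<noteq> 0" "\<not> (\<exists>t. t ^ 2 = n)" using exists_nsq[OF q] by blast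
  have g3: "Aq n * Ai n \<noteq> 1"
  proof -
    have "Aq n * Ai n = qchar n"
      using n(1) by (simp add: Aq_def Ai_def A_mult[OF Ach, symmetric] A_one[OF Ach])
    then show ?thesis using n by (simp add: qchar_def)
  qed
  have "jacobi Aq Ai * cnj (jacobi Aq Ai) = of_nat CARD('a)"
    by (rule jacobi_norm[OF Aq_mult Ai_mult Aq0 Ai0 Aq1 Ai1 Aq_cnj Ai_cnj g(1) g1 _ g2 n(1) g3])
       (use g in simp)
  then show ?thesis by auto
qed

lemma J2_ne: "jacobi Aq Aq \<noteq> 0"
proof -
  obtain g where g: "g \<noteq> 0" "A g ^ 2 \<noteq> 1" using exA by blast
  have g1: "Aq g \<noteq> 1"
  proof
    assume h: "Aq g = 1"
    then have "A g = qchar g" using qchar_sq_eq[OF g(1)] unfolding Aq_def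
      by (metis mult.assoc mult.right_neutral)
    then have "A g ^ 2 = 1" using qchar_sq_eq[OF g(1)] by (simp add: power2_eq_square)
    then show False using g by simp
  qed
  have g3: "Aq g * Aq g \<noteq> 1"
    using g qchar_sq_eq[OF g(1)] by (simp add: Aq_def power2_eq_square mult_ac)
  have "jacobi Aq Aq * cnj (jacobi Aq Aq) = of_nat CARD('a)"
    by (rule jacobi_norm[OF Aq_mult Aq_mult Aq0 Aq0 Aq1 Aq1 Aq_cnj Aq_cnj g(1) g1 g(1) g1 g(1) g3])
  then show ?thesis by auto
qed


lemma Amul: "A (x * y) = A x * A y" by (rule A_mult[OF Ach])
lemma Acnj: "cnj (A x) = A (inverse x)" by (rule A_cnj[OF Ach])
lemma A0': "A 0 = 0" by (rule A0[OF Ach])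

lemma P1_eq: "P21 A (cmul A qchar) qchar z = (\<Sum>y\<in>UNIV. qchar y * A (y / ((1 - y) * (1 - z * y))))"
  unfolding P21_def
proof (rule sum.cong[OF refl])
  fix y :: 'a
  show "cmul A qchar y * cmul (cconj (cmul A qchar)) qchar (1 - y) * cconj A (1 - z * y) =
        qchar y * A (y / ((1 - y) * (1 - z * y)))"
  proof (cases "y = 1")
    case True then show ?thesis by (simp add: cmul_def cconj_def A0')
  next
    case False
    then have "qchar (1 - y) * qchar (1 - y) = 1" by (intro qchar_sq_eq) simp
    then have "cmul A qchar y * cmul (cconj (cmul A qchar)) qchar (1 - y) * cconj A (1 - z * y)
        = qchar y * (A y * A (inverse (1 - y)) * A (inverse (1 - z * y)))"
      by (simp add: cmul_def cconj_def Acnj mult_ac)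
    also have "A y * A (inverse (1 - y)) * A (inverse (1 - z * y)) = A (y / ((1 - y) * (1 - z * y)))"
      by (simp add: Amul[symmetric] divide_inverse mult_ac)
    finally show ?thesis .
  qed
qed

lemma J1_eq1: "jacobi (cmul A qchar) (cmul qchar (cconj (cmul A qchar))) = jacobi Aq Ai"
proof -
  have "cmul qchar (cconj (cmul A qchar)) = Ai"
  proof
    fix x :: 'a
    show "cmul qchar (cconj (cmul A qchar)) x = Ai x"
    proof (cases "x = 0")
      case True then show ?thesis by (simp add: cmul_def cconj_def Ai_def A0')
    next
      case False
      then have "qchar x * qchar x = 1" by (rule qchar_sq_eq)
      then show ?thesis by (simp add: cmul_def cconj_def Ai_def Acnj mult_ac)
    qed
  qed
  moreover have "cmul A qchar = Aq" by (simp add: fun_eq_iff cmul_def Aq_def)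
  ultimately show ?thesis by simp
qed

lemma J1_eq2: "jacobi Aq Ai = (\<Sum>x\<in>UNIV. qchar x * A (x / (1 - x)))"
  unfolding jacobi_def Aq_def Ai_def
  by (intro sum.cong refl) (simp add: Amul[symmetric] divide_inverse mult_ac)

lemma P2_eq: "P21 A (cmul A qchar) (cmul A A) z =
   (\<Sum>y\<in>UNIV. qchar (y * (1 - y)) * A (y * (1 - y) / (1 - z * y)))"
  unfolding P21_def
proof (rule sum.cong[OF refl])
  fix y :: 'a
  have key: "cnj (A w) * A w * A w = A w" for w
  proof (cases "w = 0")
    case True then show ?thesis by (simp add: A0')
  next
    case False
    then show ?thesis by (simp add: Acnj Amul[symmetric])
  qed
  have "cmul A qchar y * cmul (cconj (cmul A qchar)) (cmul A A) (1 - y) * cconj A (1 - z * y)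
      = qchar y * qchar (1 - y) * (A y * (cnj (A (1 - y)) * A (1 - y) * A (1 - y)) * A (inverse (1 - z * y)))"
    by (simp add: cmul_def cconj_def Acnj mult_ac)
  also have "\<dots> = qchar (y * (1 - y)) * A (y * (1 - y) / (1 - z * y))"
    by (simp only: key) (simp add: qm Amul[symmetric] divide_inverse mult_ac)
  finally show "cmul A qchar y * cmul (cconj (cmul A qchar)) (cmul A A) (1 - y) * cconj A (1 - z * y)
      = qchar (y * (1 - y)) * A (y * (1 - y) / (1 - z * y))" .
qed

lemma J2_eq1: "jacobi (cmul A qchar) (cmul (cmul A A) (cconj (cmul A qchar))) = jacobi Aq Aq"
proof -
  have "cmul (cmul A A) (cconj (cmul A qchar)) = Aq"
  proof
    fix x :: 'a
    show "cmul (cmul A A) (cconj (cmul A qchar)) x = Aq x"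
    proof (cases "x = 0")
      case True then show ?thesis by (simp add: cmul_def cconj_def Aq_def A0')
    next
      case False
      then have "x * x * inverse x = x" by (simp add: field_simps)
      then have "A x * A x * A (inverse x) = A x" by (metis Amul)
      then show ?thesis by (auto simp add: cmul_def cconj_def Aq_def Acnj mult_ac)
    qed
  qed
  moreover have "cmul A qchar = Aq" by (simp add: fun_eq_iff cmul_def Aq_def)
  ultimately show ?thesis by simp
qed

lemma J2_eq2: "jacobi Aq Aq = (\<Sum>x\<in>UNIV. qchar (x * (1 - x)) * A (x * (1 - x)))"
  unfolding jacobi_def Aq_def
  by (intro sum.cong refl) (simp add: Amul qm mult_ac)


lemma four: "(4::'a) \<noteq> 0"
proof -
  have e: "(4::'a) = 2 * 2" by simp
  show ?thesis using two by (metis mult_eq_0_iff e)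
qed

lemma sq_helper:
  fixes w x e :: 'a
  assumes "w \<noteq> 0"
  shows "x * e ^ 2 / w = x * w * (e / w) ^ 2"
  using assms by (simp add: power2_eq_square field_simps)

lemma w_helper:
  fixes u a W :: 'a
  assumes "a \<noteq> 0"
  shows "u * a * (W / (2 * a)) ^ 2 = u * (W ^ 2 / (4 * a))"
  using assms two four by (simp add: power2_eq_square field_simps)

lemma fib1:
  fixes c u :: 'a
  assumes c: "c \<noteq> 0" and u: "u \<noteq> 0"
  shows "{x. x / ((1 - x) * c) = u} = (if 1 + c * u = 0 then {} else {c * u / (1 + c * u)})"
proof -
  have "x / ((1 - x) * c) = u \<longleftrightarrow> x * (1 + c * u) = c * u \<and> x \<noteq> 1" for x
  proof (cases "x = 1")
    case True then show ?thesis using u by simp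
  next
    case False
    then have "1 - x \<noteq> 0" by simp
    then have "x / ((1 - x) * c) = u \<longleftrightarrow> x = u * ((1 - x) * c)" using c by (simp add: field_simps)
    also have "\<dots> \<longleftrightarrow> x * (1 + c * u) = c * u" by (auto simp: algebra_simps)
    finally show ?thesis using False by simp
  qed
  then have eq: "{x. x / ((1 - x) * c) = u} = {x. x * (1 + c * u) = c * u \<and> x \<noteq> 1}" by blast
  show ?thesis
  proof (cases "1 + c * u = 0")
    case True
    then have "c * u \<noteq> 0" using c u by simp
    then show ?thesis using eq True by auto
  next
    case False
    have "x * (1 + c * u) = c * u \<and> x \<noteq> 1 \<longleftrightarrow> x = c * u / (1 + c * u)" for x
    proof
      assume "x * (1 + c * u) = c * u \<and> x \<noteq> 1"
      then show "x = c * u / (1 + c * u)" using False by (simp add: field_simps)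
    next
      assume x: "x = c * u / (1 + c * u)"
      then have "x * (1 + c * u) = c * u" using False by simp
      moreover have "x \<noteq> 1"
      proof
        assume "x = 1"
        then have "c * u = 1 + c * u" using x False by (simp add: field_simps)
        then show False by simp
      qed
      ultimately show "x * (1 + c * u) = c * u \<and> x \<noteq> 1" by simp
    qed
    then show ?thesis using eq False by auto
  qed
qed

lemma K1:
  assumes ce: "c = e ^ 2"
  shows "jacobi Aq Ai * A (inverse c) = (\<Sum>u\<in>UNIV. A u * qchar (u * (1 + c * u)))"
proof (cases "e = 0")
  case True
  then show ?thesis using ce sum_Aq' by (simp add: A0')
next
  case False
  then have c0: "c \<noteq> 0" using ce by simp
  have "jacobi Aq Ai * A (inverse c) = (\<Sum>x\<in>UNIV. qchar x * A (x / ((1 - x) * c)))"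
    unfolding J1_eq2 sum_distrib_right
    by (intro sum.cong refl) (simp add: Amul[symmetric] divide_inverse mult_ac)
  also have "\<dots> = (\<Sum>u\<in>UNIV. A u * (\<Sum>x\<in>{x. x / ((1 - x) * c) = u}. qchar x))"
    by (rule sum_fiber)
  also have "\<dots> = (\<Sum>u\<in>UNIV. A u * qchar (u * (1 + c * u)))"
  proof (rule sum.cong[OF refl])
    fix u :: 'a
    show "A u * (\<Sum>x\<in>{x. x / ((1 - x) * c) = u}. qchar x) = A u * qchar (u * (1 + c * u))"
    proof (cases "u = 0")
      case True then show ?thesis by (simp add: A0')
    next
      case u0: False
      show ?thesis
      proof (cases "1 + c * u = 0")
        case True then show ?thesis using fib1[OF c0 u0] by simp
      next
        case False
        have "c * u / (1 + c * u) = u * (1 + c * u) * (e / (1 + c * u)) ^ 2"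
          using sq_helper[OF False, of u e] ce by (simp add: mult.commute)
        then have "qchar (c * u / (1 + c * u)) = qchar (u * (1 + c * u))"
          using qchar_mul_sq[of "e / (1 + c * u)" "u * (1 + c * u)"] False \<open>e \<noteq> 0\<close> by simp
        then show ?thesis using fib1[OF c0 u0] False by simp
      qed
    qed
  qed
  finally show ?thesis .
qed

lemma fib2:
  fixes c u :: 'a
  assumes c: "c \<noteq> 0"
  shows "{x. 4 * x * (1 - x) / c = u} = (\<lambda>r. (1 + r) / 2) ` {r. r ^ 2 = 1 - c * u}"
proof -
  have "4 * x * (1 - x) / c = u \<longleftrightarrow> (2 * x - 1) ^ 2 = 1 - c * u" for x
  proof -
    have "4 * x * (1 - x) / c = u \<longleftrightarrow> 4 * x * (1 - x) = c * u" using c by (auto simp: field_simps)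
    also have "\<dots> \<longleftrightarrow> (2 * x - 1) ^ 2 = 1 - c * u"
      by (simp add: power2_eq_square algebra_simps) (auto simp: algebra_simps)
    finally show ?thesis .
  qed
  moreover have "x \<in> (\<lambda>r. (1 + r) / 2) ` {r. r ^ 2 = 1 - c * u} \<longleftrightarrow> (2 * x - 1) ^ 2 = 1 - c * u" for x
  proof
    assume "x \<in> (\<lambda>r. (1 + r) / 2) ` {r. r ^ 2 = 1 - c * u}"
    then obtain r where "r ^ 2 = 1 - c * u" "x = (1 + r) / 2" by auto
    moreover then have "2 * x - 1 = r" using two by (simp add: field_simps)
    ultimately show "(2 * x - 1) ^ 2 = 1 - c * u" by simp
  next
    assume h: "(2 * x - 1) ^ 2 = 1 - c * u"
    have "x = (1 + (2 * x - 1)) / 2" using two by (simp add: field_simps)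
    then show "x \<in> (\<lambda>r. (1 + r) / 2) ` {r. r ^ 2 = 1 - c * u}" using h by blast
  qed
  ultimately show ?thesis by blast
qed

lemma K2:
  assumes ce: "c = e ^ 2"
  shows "jacobi Aq Aq * A (4 * inverse c) = (\<Sum>u\<in>UNIV. A u * (qchar u * qchar (1 - c * u)))"
proof (cases "e = 0")
  case True
  then show ?thesis using ce sum_Aq' by (simp add: A0')
next
  case False
  then have c0: "c \<noteq> 0" using ce by simp
  have "jacobi Aq Aq * A (4 * inverse c) = (\<Sum>x\<in>UNIV. qchar (x * (1 - x)) * A (4 * x * (1 - x) / c))"
    unfolding J2_eq2 sum_distrib_right
    by (intro sum.cong refl) (simp add: Amul[symmetric] divide_inverse mult_ac)
  also have "\<dots> = (\<Sum>u\<in>UNIV. A u * (\<Sum>x\<in>{x. 4 * x * (1 - x) / c = u}. qchar (x * (1 - x))))"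
    by (rule sum_fiber)
  also have "\<dots> = (\<Sum>u\<in>UNIV. A u * qchar u + A u * (qchar u * qchar (1 - c * u)))"
  proof (rule sum.cong[OF refl])
    fix u :: 'a
    show "A u * (\<Sum>x\<in>{x. 4 * x * (1 - x) / c = u}. qchar (x * (1 - x))) =
          A u * qchar u + A u * (qchar u * qchar (1 - c * u))"
    proof (cases "u = 0")
      case True then show ?thesis by (simp add: A0')
    next
      case u0: False
      have "(\<Sum>x\<in>{x. 4 * x * (1 - x) / c = u}. qchar (x * (1 - x)))
          = (\<Sum>r\<in>{r. r ^ 2 = 1 - c * u}. qchar ((1 + r) / 2 * (1 - (1 + r) / 2)))"
        unfolding fib2[OF c0] by (rule sum_image_inj[OF two])
      also have "\<dots> = (\<Sum>r\<in>{r. r ^ 2 = 1 - c * u}. qchar u * 1)"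
      proof (rule sum.cong[OF refl])
        fix r assume "r \<in> {r. r ^ 2 = 1 - c * u}"
        then have r: "r ^ 2 = 1 - c * u" by simp
        have "(1 + r) / 2 * (1 - (1 + r) / 2) = (1 - r ^ 2) / 4"
          using two by (simp add: field_simps power2_eq_square)
        also have "\<dots> = c * u / 4" using r by simp
        also have "\<dots> = u * (e / 2) ^ 2" using ce by (simp add: power_divide mult.commute)
        finally show "qchar ((1 + r) / 2 * (1 - (1 + r) / 2)) = qchar u * 1"
          using qchar_mul_sq[of "e / 2" u] \<open>e \<noteq> 0\<close> two by simp
      qed
      also have "\<dots> = qchar u * (1 + qchar (1 - c * u))"
        by (simp only: sum_distrib_left[symmetric] card_sqrts[OF two])
      finally show ?thesis by (simp add: algebra_simps)
    qed
  qed
  also have "\<dots> = (\<Sum>u\<in>UNIV. A u * (qchar u * qchar (1 - c * u)))"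
    using sum_Aq' by (simp add: sum.distrib)
  finally show ?thesis .
qed


lemma img_sqrt:
  fixes k m D y :: 'a
  assumes k: "k \<noteq> 0"
  shows "y \<in> (\<lambda>r. (m + r) / k) ` {r. r ^ 2 = D} \<longleftrightarrow> (k * y - m) ^ 2 = D"
proof
  assume "y \<in> (\<lambda>r. (m + r) / k) ` {r. r ^ 2 = D}"
  then obtain r where "r ^ 2 = D" "y = (m + r) / k" by auto
  moreover then have "k * y - m = r" using k by (simp add: field_simps)
  ultimately show "(k * y - m) ^ 2 = D" by simp
next
  assume h: "(k * y - m) ^ 2 = D"
  have "y = (m + (k * y - m)) / k" using k by (simp add: field_simps)
  then show "y \<in> (\<lambda>r. (m + r) / k) ` {r. r ^ 2 = D}" using h by blast
qed

lemma fib_h1: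
  fixes u z :: 'a
  assumes u: "u \<noteq> 0" and z: "z \<noteq> 0"
  shows "{y. y / ((1 - y) * (1 - z * y)) = u} =
     (\<lambda>r. ((u * (1 + z) + 1) + r) / (2 * u * z)) ` {r. r ^ 2 = (u * (1 + z) + 1) ^ 2 - 4 * u ^ 2 * z}"
proof -
  have k: "2 * u * z \<noteq> 0" using u z two by simp
  have "y / ((1 - y) * (1 - z * y)) = u \<longleftrightarrow> y = u * ((1 - y) * (1 - z * y))" for y
  proof (cases "(1 - y) * (1 - z * y) = 0")
    case True
    then have "y \<noteq> 0" by auto
    then show ?thesis using True u by auto
  next
    case False
    then show ?thesis by (auto simp: field_simps)
  qed
  moreover have "y = u * ((1 - y) * (1 - z * y)) \<longleftrightarrow>
       (2 * u * z * y - (u * (1 + z) + 1)) ^ 2 = (u * (1 + z) + 1) ^ 2 - 4 * u ^ 2 * z" for y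
  proof -
    have id: "(2 * u * z * y - (u * (1 + z) + 1)) ^ 2 - ((u * (1 + z) + 1) ^ 2 - 4 * u ^ 2 * z)
        = (4 * u * z) * (u * ((1 - y) * (1 - z * y)) - y)"
      by (simp add: power2_eq_square algebra_simps)
    have k4: "4 * u * z \<noteq> 0" using u z four by simp
    show ?thesis
    proof
      assume "y = u * ((1 - y) * (1 - z * y))"
      then show "(2 * u * z * y - (u * (1 + z) + 1)) ^ 2 = (u * (1 + z) + 1) ^ 2 - 4 * u ^ 2 * z"
        using id by simp
    next
      assume "(2 * u * z * y - (u * (1 + z) + 1)) ^ 2 = (u * (1 + z) + 1) ^ 2 - 4 * u ^ 2 * z"
      then have "(4 * u * z) * (u * ((1 - y) * (1 - z * y)) - y) = 0" using id by simp
      then show "y = u * ((1 - y) * (1 - z * y))" using k4 by simp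
    qed
  qed
  ultimately show ?thesis using img_sqrt[OF k] by blast
qed

lemma L1_sq:
  fixes u s :: 'a
  assumes u: "u \<noteq> 0" and s: "s \<noteq> 0"
  shows "(\<Sum>y\<in>{y. y / ((1 - y) * (1 - s ^ 2 * y)) = u}. qchar y) =
     qchar (u * (1 + (1 - s) ^ 2 * u)) + qchar (u * (1 + (1 + s) ^ 2 * u))"
proof -
  define z where "z = s ^ 2"
  define m where "m = u * (1 + z) + 1"
  define a where "a = 1 + (1 - s) ^ 2 * u"
  define b where "b = 1 + (1 + s) ^ 2 * u"
  have z0: "z \<noteq> 0" using s by (simp add: z_def)
  have k: "2 * u * z \<noteq> 0" using u z0 two by simp
  have D: "m ^ 2 - 4 * u ^ 2 * z = a * b"
    by (simp add: m_def a_def b_def z_def power2_eq_square algebra_simps)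
  have m2: "2 * m = a + b" by (simp add: m_def a_def b_def z_def power2_eq_square algebra_simps)
  have "(\<Sum>y\<in>{y. y / ((1 - y) * (1 - s ^ 2 * y)) = u}. qchar y)
      = (\<Sum>r\<in>{r. r ^ 2 = a * b}. qchar ((m + r) / (2 * u * z)))"
    using fib_h1[OF u z0] sum_image_inj[OF k, of qchar m] D unfolding m_def z_def by simp
  also have "\<dots> = qchar (u * a) + qchar (u * b)"
  proof (rule sqrt_sum[OF two u])
    have "a - b = - (4 * s * u)" by (simp add: a_def b_def power2_eq_square algebra_simps)
    moreover have "4 * s * u \<noteq> 0" using four s u by simp
    ultimately show "a \<noteq> 0 \<or> b \<noteq> 0" by auto
  next
    fix r assume rr: "r ^ 2 = a * b"
    define Y where "Y = (m + r) / (2 * u * z)"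
    have Y: "2 * u * z * Y = m + r" using k by (simp add: Y_def)
    have Y0: "Y \<noteq> 0"
    proof
      assume "Y = 0"
      then have "r = - m" using Y by (simp add: add_eq_0_iff)
      then have "4 * u ^ 2 * z = 0" using rr D by simp
      then show False using four u z0 by simp
    qed
    have ka: "4 * u * z * Y * a = (r + a) ^ 2"
    proof -
      have "4 * u * z * Y * a = 2 * a * (m + r)" using Y by (simp add: algebra_simps flip: Y)
      also have "\<dots> = a * (2 * m) + 2 * a * r" by (simp add: algebra_simps)
      also have "\<dots> = (r + a) ^ 2" using rr m2 by (simp add: power2_eq_square algebra_simps)
      finally show ?thesis .
    qed
    have kb: "4 * u * z * Y * b = (r + b) ^ 2"
    proof -
      have "4 * u * z * Y * b = 2 * b * (m + r)" using Y by (simp add: algebra_simps flip: Y)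
      also have "\<dots> = b * (2 * m) + 2 * b * r" by (simp add: algebra_simps)
      also have "\<dots> = (r + b) ^ 2" using rr m2 by (simp add: power2_eq_square algebra_simps)
      finally show ?thesis .
    qed
    show "a \<noteq> 0 \<Longrightarrow> qchar ((m + r) / (2 * u * z)) = qchar (u * a)"
    proof -
      assume a0: "a \<noteq> 0"
      have ne: "r + a \<noteq> 0" using ka Y0 a0 u z0 four by auto
      have "Y = u * a * ((r + a) / (2 * u * s * a)) ^ 2"
        using ka[symmetric] a0 u s four two by (simp add: z_def field_simps power2_eq_square)
      then show ?thesis using qchar_mul_sq[of "(r + a) / (2 * u * s * a)" "u * a"] ne a0 u s two
        by (simp add: Y_def)
    qed
    show "b \<noteq> 0 \<Longrightarrow> qchar ((m + r) / (2 * u * z)) = qchar (u * b)"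
    proof -
      assume b0: "b \<noteq> 0"
      have ne: "r + b \<noteq> 0" using kb Y0 b0 u z0 four by auto
      have "Y = u * b * ((r + b) / (2 * u * s * b)) ^ 2"
        using kb[symmetric] b0 u s four two by (simp add: z_def field_simps power2_eq_square)
      then show ?thesis using qchar_mul_sq[of "(r + b) / (2 * u * s * b)" "u * b"] ne b0 u s two
        by (simp add: Y_def)
    qed
  qed
  finally show ?thesis by (simp add: a_def b_def)
qed


lemma L1_nsq:
  fixes u z :: 'a
  assumes u: "u \<noteq> 0" and z: "z \<noteq> 0" and nz: "\<not> (\<exists>t. t ^ 2 = z)"
  shows "(\<Sum>y\<in>{y. y / ((1 - y) * (1 - z * y)) = u}. qchar y) = 0"
proof -
  define m where "m = u * (1 + z) + 1"
  define D where "D = m ^ 2 - 4 * u ^ 2 * z"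
  have k: "2 * u * z \<noteq> 0" using u z two by simp
  have "(\<Sum>y\<in>{y. y / ((1 - y) * (1 - z * y)) = u}. qchar y)
      = (\<Sum>r\<in>{r. r ^ 2 = D}. qchar ((m + r) / (2 * u * z)))"
    using fib_h1[OF u z] sum_image_inj[OF k, of qchar m] unfolding m_def D_def by simp
  also have "\<dots> = 0"
  proof (rule sqrt_sum_antisym)
    fix r assume rr: "r ^ 2 = D"
    have "(m + r) / (2 * u * z) * ((m + - r) / (2 * u * z)) = (m ^ 2 - r ^ 2) / (2 * u * z) ^ 2"
      by (simp add: power2_eq_square field_simps)
    also have "\<dots> = (4 * u ^ 2 * z) / (2 * u * z) ^ 2" using rr by (simp add: D_def)
    also have "\<dots> = inverse z" using u z two four by (simp add: power2_eq_square field_simps)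
    finally have "qchar ((m + r) / (2 * u * z)) * qchar ((m + - r) / (2 * u * z)) = qchar (inverse z)"
      by (simp add: qm[symmetric])
    also have "\<dots> = qchar z" by (rule qchar_inv[OF two])
    also have "\<dots> = -1" using z nz by (simp add: qchar_def)
    finally show "qchar ((m + r) / (2 * u * z)) * qchar ((m + - r) / (2 * u * z)) = -1" .
  qed
  finally show ?thesis .
qed

lemma P1_fiber: "P21 A (cmul A qchar) qchar z =
   (\<Sum>u\<in>UNIV. A u * (\<Sum>y\<in>{y. y / ((1 - y) * (1 - z * y)) = u}. qchar y))"
  unfolding P1_eq by (rule sum_fiber)

lemma cc_eq: "cmul (cconj A) (cconj A) t = A (inverse (t ^ 2))"
  by (simp add: cmul_def cconj_def Acnj Amul[symmetric] power2_eq_square)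

lemma part1_sq:
  assumes z: "z \<noteq> 0" and s: "s ^ 2 = z"
  shows "F21 A (cmul A qchar) qchar z =
     (1 + qchar z) / 2 * (cmul (cconj A) (cconj A) (1 + s) + cmul (cconj A) (cconj A) (1 - s))"
proof -
  have s0: "s \<noteq> 0" using s z by auto
  have qz: "qchar z = 1" using qchar_sq[OF s0] s by simp
  have "P21 A (cmul A qchar) qchar z =
     (\<Sum>u\<in>UNIV. A u * qchar (u * (1 + (1 - s) ^ 2 * u)) + A u * qchar (u * (1 + (1 + s) ^ 2 * u)))"
    unfolding P1_fiber
  proof (rule sum.cong[OF refl])
    fix u :: 'a
    show "A u * (\<Sum>y\<in>{y. y / ((1 - y) * (1 - z * y)) = u}. qchar y) =
      A u * qchar (u * (1 + (1 - s) ^ 2 * u)) + A u * qchar (u * (1 + (1 + s) ^ 2 * u))"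
    proof (cases "u = 0")
      case True then show ?thesis by (simp add: A0')
    next
      case False then show ?thesis using L1_sq[OF False s0] s by (simp add: distrib_left)
    qed
  qed
  also have "\<dots> = jacobi Aq Ai * A (inverse ((1 - s) ^ 2)) + jacobi Aq Ai * A (inverse ((1 + s) ^ 2))"
    by (simp add: sum.distrib K1[OF refl])
  finally have P: "P21 A (cmul A qchar) qchar z = jacobi Aq Ai * (A (inverse ((1 - s) ^ 2)) + A (inverse ((1 + s) ^ 2)))"
    by (simp add: distrib_left)
  show ?thesis
    unfolding F21_def P J1_eq1 cc_eq qz using J1_ne by (simp add: add.commute)
qed

lemma part1_nsq:
  assumes z: "z \<noteq> 0" and nz: "\<not> (\<exists>s. s ^ 2 = z)"
  shows "F21 A (cmul A qchar) qchar z = 0"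
proof -
  have "P21 A (cmul A qchar) qchar z = 0"
    unfolding P1_fiber
  proof (rule sum.neutral, intro ballI)
    fix u :: 'a
    show "A u * (\<Sum>y\<in>{y. y / ((1 - y) * (1 - z * y)) = u}. qchar y) = 0"
      by (cases "u = 0") (simp_all add: A0' L1_nsq[OF _ z nz])
  qed
  then show ?thesis by (simp add: F21_def)
qed


lemma P2_fiber: "P21 A (cmul A qchar) (cmul A A) z =
   (\<Sum>u\<in>UNIV. A u * (\<Sum>y\<in>{y. y * (1 - y) / (1 - z * y) = u}. qchar (y * (1 - y))))"
  unfolding P2_eq by (rule sum_fiber)

lemma fib_h2:
  fixes u z :: 'a
  assumes u: "u \<noteq> 0"
  shows "(\<Sum>y\<in>{y. y * (1 - y) / (1 - z * y) = u}. qchar (y * (1 - y)))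
       = (\<Sum>y\<in>{y. y * (1 - y) = u * (1 - z * y)}. qchar (y * (1 - y)))"
proof (rule sum.mono_neutral_left)
  show "{y. y * (1 - y) / (1 - z * y) = u} \<subseteq> {y. y * (1 - y) = u * (1 - z * y)}"
  proof
    fix y assume "y \<in> {y. y * (1 - y) / (1 - z * y) = u}"
    then have h: "y * (1 - y) / (1 - z * y) = u" by simp
    then have "1 - z * y \<noteq> 0" using u by auto
    then show "y \<in> {y. y * (1 - y) = u * (1 - z * y)}" using h by (simp add: field_simps)
  qed
next
  show "\<forall>y\<in>{y. y * (1 - y) = u * (1 - z * y)} - {y. y * (1 - y) / (1 - z * y) = u}. qchar (y * (1 - y)) = 0"
  proof
    fix y assume "y \<in> {y. y * (1 - y) = u * (1 - z * y)} - {y. y * (1 - y) / (1 - z * y) = u}"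
    then have h1: "y * (1 - y) = u * (1 - z * y)" and h2: "y * (1 - y) / (1 - z * y) \<noteq> u"
      by blast+
    have "1 - z * y = 0"
    proof (rule ccontr)
      assume nz: "1 - z * y \<noteq> 0"
      have "y * (1 - y) / (1 - z * y) = u" using nz by (simp add: h1)
      then show False using h2 by simp
    qed
    then have "y * (1 - y) = 0" using h1 by (metis mult_zero_right)
    then show "qchar (y * (1 - y)) = 0" by (metis qchar_0)
  qed
qed simp

lemma roots2:
  fixes u z :: 'a
  shows "{y. y * (1 - y) = u * (1 - z * y)} =
    (\<lambda>r. ((1 + u * z) + r) / 2) ` {r. r ^ 2 = (1 + u * z) ^ 2 - 4 * u}"
proof -
  have "y * (1 - y) = u * (1 - z * y) \<longleftrightarrow> (2 * y - (1 + u * z)) ^ 2 = (1 + u * z) ^ 2 - 4 * u" for y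
  proof -
    have id: "(2 * y - (1 + u * z)) ^ 2 - ((1 + u * z) ^ 2 - 4 * u) = 4 * (u * (1 - z * y) - y * (1 - y))"
      by (simp add: power2_eq_square algebra_simps)
    show ?thesis
    proof
      assume "y * (1 - y) = u * (1 - z * y)"
      then show "(2 * y - (1 + u * z)) ^ 2 = (1 + u * z) ^ 2 - 4 * u" using id by simp
    next
      assume "(2 * y - (1 + u * z)) ^ 2 = (1 + u * z) ^ 2 - 4 * u"
      then have "4 * (u * (1 - z * y) - y * (1 - y)) = 0" using id by simp
      then show "y * (1 - y) = u * (1 - z * y)" using four by simp
    qed
  qed
  then show ?thesis using img_sqrt[OF two] by blast
qed

lemma L2_sq:
  fixes u s :: 'a
  assumes u: "u \<noteq> 0" and s: "s \<noteq> 0"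
  shows "(\<Sum>y\<in>{y. y * (1 - y) = u * (1 - (1 - s ^ 2) * y)}. qchar (y * (1 - y))) =
     qchar u * qchar (1 - (1 + s) ^ 2 * u) + qchar u * qchar (1 - (1 - s) ^ 2 * u)"
proof -
  define z where "z = 1 - s ^ 2"
  define m where "m = 1 + u * z"
  define a where "a = 1 - (1 + s) ^ 2 * u"
  define b where "b = 1 - (1 - s) ^ 2 * u"
  have D: "m ^ 2 - 4 * u = a * b"
    by (simp add: m_def a_def b_def z_def power2_eq_square algebra_simps)
  have "(\<Sum>y\<in>{y. y * (1 - y) = u * (1 - z * y)}. qchar (y * (1 - y)))
      = (\<Sum>r\<in>{r. r ^ 2 = a * b}. qchar ((m + r) / 2 * (1 - (m + r) / 2)))"
    unfolding roots2 using sum_image_inj[OF two, of "\<lambda>y. qchar (y * (1 - y))" m] D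
    unfolding m_def by simp
  also have "\<dots> = qchar (u * a) + qchar (u * b)"
  proof (rule sqrt_sum[OF two u])
    have "a - b = - (4 * s * u)" by (simp add: a_def b_def power2_eq_square algebra_simps)
    moreover have "4 * s * u \<noteq> 0" using four s u by simp
    ultimately show "a \<noteq> 0 \<or> b \<noteq> 0" by auto
  next
    fix r assume rr: "r ^ 2 = a * b"
    define Y where "Y = (m + r) / 2"
    have Y2: "2 * Y = m + r" using two by (simp add: Y_def)
    have root: "Y * (1 - Y) = u * (1 - z * Y)"
    proof -
      have "(2 * Y - m) ^ 2 = m ^ 2 - 4 * u" using Y2 rr D by simp
      then have "Y \<in> {y. y * (1 - y) = u * (1 - z * y)}"
        unfolding roots2 img_sqrt[OF two] by (simp add: m_def)
      then show ?thesis by simp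
    qed
    have nz: "1 - z * Y \<noteq> 0"
    proof
      assume h: "1 - z * Y = 0"
      then have "Y * (1 - Y) = 0" using root by simp
      moreover have "Y \<noteq> 0" using h by auto
      ultimately have "Y = 1" by simp
      then have "s ^ 2 = 0" using h by (simp add: z_def)
      then show False using s by simp
    qed
    have e4: "4 * (1 - z * Y) = 2 * (2 - z * (m + r))"
    proof -
      have "4 * (1 - z * Y) = 2 * (2 - z * (2 * Y))" by (simp add: algebra_simps)
      then show ?thesis using Y2 by simp
    qed
    have ida: "2 * a * (2 - z * (m + r)) - ((1 + s) * r - (1 - s) * a) ^ 2 = (1 + s) ^ 2 * (a * b - r ^ 2)"
      by (simp add: a_def b_def m_def z_def power2_eq_square algebra_simps)
    have idb: "2 * b * (2 - z * (m + r)) - ((1 - s) * r - (1 + s) * b) ^ 2 = (1 - s) ^ 2 * (a * b - r ^ 2)"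
      by (simp add: a_def b_def m_def z_def power2_eq_square algebra_simps)
    have wa: "4 * (1 - z * Y) * a = ((1 + s) * r - (1 - s) * a) ^ 2"
    proof -
      have "4 * (1 - z * Y) * a = a * (4 * (1 - z * Y))" by (simp add: ac_simps)
      also have "\<dots> = 2 * a * (2 - z * (m + r))" by (simp only: e4) (simp add: ac_simps)
      finally have x: "4 * (1 - z * Y) * a = 2 * a * (2 - z * (m + r))" .
      have "2 * a * (2 - z * (m + r)) - ((1 + s) * r - (1 - s) * a) ^ 2 = 0" using ida by (simp add: rr)
      then show ?thesis using x by simp
    qed
    have wb: "4 * (1 - z * Y) * b = ((1 - s) * r - (1 + s) * b) ^ 2"
    proof -
      have "4 * (1 - z * Y) * b = b * (4 * (1 - z * Y))" by (simp add: ac_simps)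
      also have "\<dots> = 2 * b * (2 - z * (m + r))" by (simp only: e4) (simp add: ac_simps)
      finally have x: "4 * (1 - z * Y) * b = 2 * b * (2 - z * (m + r))" .
      have "2 * b * (2 - z * (m + r)) - ((1 - s) * r - (1 + s) * b) ^ 2 = 0" using idb by (simp add: rr)
      then show ?thesis using x by simp
    qed
    have ya: "a \<noteq> 0 \<Longrightarrow> qchar (Y * (1 - Y)) = qchar (u * a)"
    proof -
      assume a0: "a \<noteq> 0"
      define w where "w = ((1 + s) * r - (1 - s) * a) / (2 * a)"
      have w0: "w \<noteq> 0"
      proof
        assume "w = 0"
        then have "(1 + s) * r - (1 - s) * a = 0" using a0 two by (simp add: w_def)
        then have "4 * (1 - z * Y) * a = 0" using wa by simp
        then show False using four nz a0 by simp
      qed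
      have "u * a * w ^ 2 = u * (((1 + s) * r - (1 - s) * a) ^ 2 / (4 * a))"
        unfolding w_def by (rule w_helper[OF a0])
      also have "\<dots> = u * (4 * (1 - z * Y) * a / (4 * a))" by (simp only: wa)
      also have "\<dots> = Y * (1 - Y)" using a0 four by (simp add: root)
      finally have "Y * (1 - Y) = u * a * w ^ 2" by simp
      then show ?thesis using qchar_mul_sq[OF w0, of "u * a"] by simp
    qed
    then show "a \<noteq> 0 \<Longrightarrow> qchar ((m + r) / 2 * (1 - (m + r) / 2)) = qchar (u * a)"
      unfolding Y_def by blast
    show "b \<noteq> 0 \<Longrightarrow> qchar ((m + r) / 2 * (1 - (m + r) / 2)) = qchar (u * b)"
    proof -
      assume b0: "b \<noteq> 0"
      define w where "w = ((1 - s) * r - (1 + s) * b) / (2 * b)"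
      have w0: "w \<noteq> 0"
      proof
        assume "w = 0"
        then have "(1 - s) * r - (1 + s) * b = 0" using b0 two by (simp add: w_def)
        then have "4 * (1 - z * Y) * b = 0" using wb by simp
        then show False using four nz b0 by simp
      qed
      have "u * b * w ^ 2 = u * (((1 - s) * r - (1 + s) * b) ^ 2 / (4 * b))"
        unfolding w_def by (rule w_helper[OF b0])
      also have "\<dots> = u * (4 * (1 - z * Y) * b / (4 * b))" by (simp only: wb)
      also have "\<dots> = Y * (1 - Y)" using b0 four by (simp add: root)
      finally have "Y * (1 - Y) = u * b * w ^ 2" by simp
      then have "qchar (Y * (1 - Y)) = qchar (u * b)" using qchar_mul_sq[OF w0, of "u * b"] by simp
      then show ?thesis unfolding Y_def .
    qed
  qed
  finally show ?thesis by (simp add: a_def b_def z_def qm)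
qed


lemma L2_s0:
  fixes u :: 'a
  shows "(\<Sum>y\<in>{y. y * (1 - y) = u * (1 - y)}. qchar (y * (1 - y))) = qchar u * qchar (1 - u)"
proof -
  have "y * (1 - y) = u * (1 - y) \<longleftrightarrow> (y - u) * (1 - y) = 0" for y
    by (simp add: algebra_simps)
  then have set: "{y. y * (1 - y) = u * (1 - y)} = {1, u}" by auto
  show ?thesis
  proof (cases "u = 1")
    case True then show ?thesis using set by simp
  next
    case False then show ?thesis using set by (simp add: qm)
  qed
qed

lemma L2_nsq:
  fixes u z :: 'a
  assumes u: "u \<noteq> 0" and nz: "\<not> (\<exists>t. t ^ 2 = 1 - z)"
  shows "(\<Sum>y\<in>{y. y * (1 - y) = u * (1 - z * y)}. qchar (y * (1 - y))) = 0"
proof -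
  define m where "m = 1 + u * z"
  have z1: "1 - z \<noteq> 0"
  proof
    assume "1 - z = 0"
    then have "(0::'a) ^ 2 = 1 - z" by simp
    with nz show False by blast
  qed
  have "(\<Sum>y\<in>{y. y * (1 - y) = u * (1 - z * y)}. qchar (y * (1 - y)))
      = (\<Sum>r\<in>{r. r ^ 2 = m ^ 2 - 4 * u}. qchar ((m + r) / 2 * (1 - (m + r) / 2)))"
    unfolding roots2 using sum_image_inj[OF two, of "\<lambda>y. qchar (y * (1 - y))" "1 + u * z"]
    unfolding m_def by simp
  also have "\<dots> = 0"
  proof (rule sqrt_sum_antisym)
    fix r assume rr: "r ^ 2 = m ^ 2 - 4 * u"
    define Y1 where "Y1 = (m + r) / 2"
    define Y2 where "Y2 = (m + - r) / 2"
    have p: "Y1 * Y2 = u"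
    proof -
      have "Y1 * Y2 = (m ^ 2 - r ^ 2) / 4" using two four
        by (simp add: Y1_def Y2_def power2_eq_square field_simps)
      also have "\<dots> = u" using rr four by simp
      finally show ?thesis .
    qed
    have sm: "Y1 + Y2 = m" using two by (simp add: Y1_def Y2_def field_simps)
    have "Y1 * (1 - Y1) * (Y2 * (1 - Y2)) = Y1 * Y2 * (1 - (Y1 + Y2) + Y1 * Y2)"
      by (simp add: algebra_simps)
    also have "\<dots> = (1 - z) * u ^ 2" unfolding p sm m_def by (simp add: power2_eq_square algebra_simps)
    finally have E: "Y1 * (1 - Y1) * (Y2 * (1 - Y2)) = (1 - z) * u ^ 2" .
    have "qchar (Y1 * (1 - Y1)) * qchar (Y2 * (1 - Y2)) = qchar (Y1 * (1 - Y1) * (Y2 * (1 - Y2)))"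
      by (rule qm[symmetric])
    also have "\<dots> = qchar ((1 - z) * u ^ 2)" by (simp only: E)
    also have "\<dots> = qchar (1 - z)" using u by (rule qchar_mul_sq)
    also have "\<dots> = -1" using z1 nz by (simp add: qchar_def)
    finally show "qchar ((m + r) / 2 * (1 - (m + r) / 2)) * qchar ((m + - r) / 2 * (1 - (m + - r) / 2)) = -1"
      by (simp only: Y1_def Y2_def)
  qed
  finally show ?thesis .
qed

lemma inv4: "inverse (((x::'a) / 2) ^ 2) = 4 * inverse (x ^ 2)"
proof -
  have h: "(x / 2) ^ 2 = x ^ 2 / 4" by (simp add: power_divide)
  have "inverse ((x / 2) ^ 2) = 4 / x ^ 2" by (simp only: h inverse_divide)
  then show ?thesis by (simp only: divide_inverse)
qed

lemma part2_sq:
  assumes z: "z \<noteq> 0" and s: "s ^ 2 = 1 - z"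
  shows "F21 A (cmul A qchar) (cmul A A) z =
     (1 + qchar (1 - z)) / 2 * (cmul (cconj A) (cconj A) ((1 + s) / 2) + cmul (cconj A) (cconj A) ((1 - s) / 2))"
proof (cases "s = 0")
  case True
  then have z1: "z = 1" using s by simp
  have "P21 A (cmul A qchar) (cmul A A) z = (\<Sum>u\<in>UNIV. A u * (qchar u * qchar (1 - 1 * u)))"
    unfolding P2_fiber
  proof (rule sum.cong[OF refl])
    fix u :: 'a
    show "A u * (\<Sum>y\<in>{y. y * (1 - y) / (1 - z * y) = u}. qchar (y * (1 - y))) = A u * (qchar u * qchar (1 - 1 * u))"
    proof (cases "u = 0")
      case True then show ?thesis by (simp add: A0')
    next
      case False then show ?thesis using fib_h2[OF False, of z] L2_s0[of u] z1 by simp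
    qed
  qed
  also have "\<dots> = jacobi Aq Aq * A (4 * inverse 1)" using K2[of 1 1] by simp
  finally have P: "P21 A (cmul A qchar) (cmul A A) z = jacobi Aq Aq * A 4" by simp
  have "cmul (cconj A) (cconj A) (1 / 2) = A 4" unfolding cc_eq using inv4[of 1] by simp
  then show ?thesis unfolding F21_def J2_eq1 P using True z1 J2_ne by simp
next
  case False
  have qz: "qchar (1 - z) = 1" using qchar_sq[OF False] s by simp
  have zs: "z = 1 - s ^ 2" using s by simp
  have "P21 A (cmul A qchar) (cmul A A) z =
     (\<Sum>u\<in>UNIV. A u * (qchar u * qchar (1 - (1 + s) ^ 2 * u)) + A u * (qchar u * qchar (1 - (1 - s) ^ 2 * u)))"
    unfolding P2_fiber
  proof (rule sum.cong[OF refl])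
    fix u :: 'a
    show "A u * (\<Sum>y\<in>{y. y * (1 - y) / (1 - z * y) = u}. qchar (y * (1 - y))) =
      A u * (qchar u * qchar (1 - (1 + s) ^ 2 * u)) + A u * (qchar u * qchar (1 - (1 - s) ^ 2 * u))"
    proof (cases "u = 0")
      case True then show ?thesis by (simp add: A0')
    next
      case u0: False
      show ?thesis using fib_h2[OF u0, of z] L2_sq[OF u0 False] zs by (simp add: distrib_left)
    qed
  qed
  also have "\<dots> = jacobi Aq Aq * A (4 * inverse ((1 + s) ^ 2)) + jacobi Aq Aq * A (4 * inverse ((1 - s) ^ 2))"
    by (simp add: sum.distrib K2[OF refl])
  finally have P: "P21 A (cmul A qchar) (cmul A A) z =
      jacobi Aq Aq * (A (4 * inverse ((1 + s) ^ 2)) + A (4 * inverse ((1 - s) ^ 2)))"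
    by (simp add: distrib_left)
  show ?thesis
    unfolding F21_def J2_eq1 P cc_eq inv4 qz using J2_ne by simp
qed

lemma part2_nsq:
  assumes nz: "\<not> (\<exists>s. s ^ 2 = 1 - z)"
  shows "F21 A (cmul A qchar) (cmul A A) z = 0"
proof -
  have "P21 A (cmul A qchar) (cmul A A) z = 0"
    unfolding P2_fiber
  proof (rule sum.neutral, intro ballI)
    fix u :: 'a
    show "A u * (\<Sum>y\<in>{y. y * (1 - y) / (1 - z * y) = u}. qchar (y * (1 - y))) = 0"
    proof (cases "u = 0")
      case True then show ?thesis by (simp add: A0')
    next
      case False then show ?thesis using fib_h2[OF False, of z] L2_nsq[OF False nz] by simp
    qed
  qed
  then show ?thesis by (simp add: F21_def)
qed

end

theorem mainTheorem5:
  fixes A :: "'a::{field,finite} \<Rightarrow> complex" and z :: 'a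
  assumes q_odd: "odd CARD('a)"
    and z_nz: "z \<noteq> 0"
    and A_char: "mult_char A"
    and A_ord: "char_order A > 2"
  shows "(\<forall>s. s ^ 2 = z \<longrightarrow>
            F21 A (cmul A qchar) qchar z =
              (1 + qchar z) / 2 * ((cmul (cconj A) (cconj A)) (1 + s) + (cmul (cconj A) (cconj A)) (1 - s)))
       \<and> ((\<nexists>s. s ^ 2 = z) \<longrightarrow> F21 A (cmul A qchar) qchar z = 0)
       \<and> (\<forall>s. s ^ 2 = 1 - z \<longrightarrow>
            F21 A (cmul A qchar) (cmul A A) z =
              (1 + qchar (1 - z)) / 2 * ((cmul (cconj A) (cconj A)) ((1 + s) / 2)
                                       + (cmul (cconj A) (cconj A)) ((1 - s) / 2)))
       \<and> ((\<nexists>s. s ^ 2 = 1 - z) \<longrightarrow> F21 A (cmul A qchar) (cmul A A) z = 0)"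
  using part1_sq[OF q_odd A_char A_ord z_nz] part1_nsq[OF q_odd A_char A_ord z_nz]
    part2_sq[OF q_odd A_char A_ord z_nz] part2_nsq[OF q_odd A_char A_ord]
  by blast

end
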